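(* Let $n\ge 8$ be an even integer and let $W_{3,n}$ be the $3$-regular Kn\"odel graph. Then $W_{3,n}$ is $\gamma$-critical if and only if $n\equiv 4 \pmod 8$.
   Context: For an even integer $n\ge 2$ and $1\le\Delta\le\lfloor\log_2 n\rfloor$, the Kn\"odel graph $W_{\Delta,n}$ is the $\Delta$-regular bipartite graph on the $n$ vertices $(i,j)$, $i\in\{1,2\}$, $0\le j\le n/2-1$, in which for every $j$ the vertex $(1,j)$ is adjacent to the vertices $(2,(j+2^k-1)\bmod (n/2))$ for $k=0,1,\dots,\Delta-1$ (and there are no other edges); in particular $W_{3,n}$ is defined for even $n\ge 8$. A set $D$ of vertices of a graph $G$ is dominating if every vertex not in $D$ is adjacent to a vertex of $D$; $\gamma(G)$ is the minimum size of a dominating set. A graph $G$ is $\gamma$-critical (domination vertex critical) if $\gamma(G-u)<\gamma(G)$ for every vertex $u$ of $G$, where $G-u$ is the graph obtained by deleting $u$. *)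

theory Defs
  imports Main
begin

text \<open>A (simple, undirected) graph is given by a finite vertex set V and a
symmetric adjacency relation adj; only adjacencies between vertices of V matter.\<close>

definition dominating :: "'a set \<Rightarrow> ('a \<Rightarrow> 'a \<Rightarrow> bool) \<Rightarrow> 'a set \<Rightarrow> bool" where
  "dominating V adj D \<longleftrightarrow> D \<subseteq> V \<and> (\<forall>v \<in> V - D. \<exists>d \<in> D. adj v d)"

definition domination_number :: "'a set \<Rightarrow> ('a \<Rightarrow> 'a \<Rightarrow> bool) \<Rightarrow> nat" where
  "domination_number V adj = Min (card ` {D. dominating V adj D})"

definition gamma_critical :: "'a set \<Rightarrow> ('a \<Rightarrow> 'a \<Rightarrow> bool) \<Rightarrow> bool" where
  "gamma_critical V adj \<longleftrightarrow>
     (\<forall>u \<in> V. domination_number (V - {u}) adj < domination_number V adj)"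

definition knoedel_vertices :: "nat \<Rightarrow> (nat \<times> nat) set" where
  "knoedel_vertices n = {1,2} \<times> {0..<n div 2}"

definition knoedel_adj :: "nat \<Rightarrow> nat \<Rightarrow> nat \<times> nat \<Rightarrow> nat \<times> nat \<Rightarrow> bool" where
  "knoedel_adj \<Delta> n x y \<longleftrightarrow>
     (\<exists>j l. \<exists>k < \<Delta>. j < n div 2 \<and> l = (j + 2^k - 1) mod (n div 2) \<and>
        ((x = (1,j) \<and> y = (2,l)) \<or> (x = (2,l) \<and> y = (1,j))))"

end

theory Submission
  imports Defs
begin

lemma adj_iff:
  "knoedel_adj 3 n x y \<longleftrightarrow>
    (\<exists>j c. j < n div 2 \<and> c \<in> {0,1,3} \<and>
       ((x = (1,j) \<and> y = (2,(j+c) mod (n div 2))) \<or> (x = (2,(j+c) mod (n div 2)) \<and> y = (1,j))))"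
proof -
  have e: "(j::nat) + 2^k - 1 = j + (2^k - 1)" for j k by (simp add: Nat.add_diff_assoc)
  have k: "(\<exists>k<(3::nat). c = 2^k - 1) \<longleftrightarrow> c \<in> {0,1,3}" for c :: nat
  proof
    assume "\<exists>k<(3::nat). c = 2^k - 1"
    then obtain k where "k<(3::nat)" "c = 2^k - 1" by blast
    moreover have "k = 0 \<or> k = 1 \<or> k = 2" using \<open>k<3\<close> by arith
    ultimately show "c \<in> {0,1,3}" by auto
  next
    assume "c \<in> {0,1,3}"
    then consider "c = 0" | "c = 1" | "c = 3" by blast
    then show "\<exists>k<(3::nat). c = 2^k - 1"
    proof cases
      case 1 then show ?thesis by (intro exI[where x=0]) simp
    next
      case 2 then show ?thesis by (intro exI[where x=1]) simp
    next
      case 3 then show ?thesis by (intro exI[where x=2]) simp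
    qed
  qed
  show ?thesis
  proof
    assume "knoedel_adj 3 n x y"
    then obtain j k where jk: "k<3" "j < n div 2" "(x = (1,j) \<and> y = (2,(j+(2^k-1)) mod (n div 2))) \<or> (x = (2,(j+(2^k-1)) mod (n div 2)) \<and> y = (1,j))"
      unfolding knoedel_adj_def e by blast
    have "2^k - 1 \<in> {0::nat,1,3}" using k jk(1) by blast
    then show "\<exists>j c. j < n div 2 \<and> c \<in> {0,1,3} \<and>
       ((x = (1,j) \<and> y = (2,(j+c) mod (n div 2))) \<or> (x = (2,(j+c) mod (n div 2)) \<and> y = (1,j)))"
      using jk(2,3) by blast
  next
    assume "\<exists>j c. j < n div 2 \<and> c \<in> {0,1,3} \<and>
       ((x = (1,j) \<and> y = (2,(j+c) mod (n div 2))) \<or> (x = (2,(j+c) mod (n div 2)) \<and> y = (1,j)))"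
    then obtain j c where jc: "j < n div 2" "c \<in> {0,1,3}" "(x = (1,j) \<and> y = (2,(j+c) mod (n div 2))) \<or> (x = (2,(j+c) mod (n div 2)) \<and> y = (1,j))"
      by blast
    obtain k where "k < 3" "c = 2^k - 1" using k jc(2) by blast
    then show "knoedel_adj 3 n x y" unfolding knoedel_adj_def e using jc(1,3) by blast
  qed
qed

lemma adj12[simp]: "knoedel_adj 3 n (1,j) (2,l) \<longleftrightarrow> j < n div 2 \<and> (\<exists>c\<in>{0,1,3}. l = (j+c) mod (n div 2))"
proof
  assume "knoedel_adj 3 n (1,j) (2,l)"
  then obtain j' c where h: "j' < n div 2" "c\<in>{0,1,3}" "((1::nat,j)=(1,j') \<and> (2::nat,l) = (2,(j'+c) mod (n div 2))) \<or> ((1::nat,j) = (2,(j'+c) mod (n div 2)) \<and> (2::nat,l) = (1,j'))"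
    unfolding adj_iff by blast
  then have "j' = j" "l = (j'+c) mod (n div 2)" by auto
  then show "j < n div 2 \<and> (\<exists>c\<in>{0,1,3}. l = (j+c) mod (n div 2))" using h(1,2) by blast
next
  assume "j < n div 2 \<and> (\<exists>c\<in>{0,1,3}. l = (j+c) mod (n div 2))"
  then obtain c where "j < n div 2" "c\<in>{0,1,3}" "l = (j+c) mod (n div 2)" by blast
  then show "knoedel_adj 3 n (1,j) (2,l)" unfolding adj_iff by (intro exI[where x=j] exI[where x=c]) simp
qed

lemma adj21[simp]: "knoedel_adj 3 n (2,l) (1,j) \<longleftrightarrow> j < n div 2 \<and> (\<exists>c\<in>{0,1,3}. l = (j+c) mod (n div 2))"
proof
  assume "knoedel_adj 3 n (2,l) (1,j)"
  then obtain j' c where h: "j' < n div 2" "c\<in>{0,1,3}" "((2::nat,l)=(1,j') \<and> (1::nat,j) = (2,(j'+c) mod (n div 2))) \<or> ((2::nat,l) = (2,(j'+c) mod (n div 2)) \<and> (1::nat,j) = (1,j'))"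
    unfolding adj_iff by blast
  then have "j' = j" "l = (j'+c) mod (n div 2)" by auto
  then show "j < n div 2 \<and> (\<exists>c\<in>{0,1,3}. l = (j+c) mod (n div 2))" using h(1,2) by blast
next
  assume "j < n div 2 \<and> (\<exists>c\<in>{0,1,3}. l = (j+c) mod (n div 2))"
  then obtain c where "j < n div 2" "c\<in>{0,1,3}" "l = (j+c) mod (n div 2)" by blast
  then show "knoedel_adj 3 n (2,l) (1,j)" unfolding adj_iff by (intro exI[where x=j] exI[where x=c]) simp
qed

lemma adj_fst: "knoedel_adj 3 n x y \<Longrightarrow> (fst x = 1 \<and> fst y = 2) \<or> (fst x = 2 \<and> fst y = 1)"
  unfolding adj_iff by auto

lemma finite_V[simp]: "finite (knoedel_vertices n)"
  unfolding knoedel_vertices_def by auto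

lemma dn_le:
  assumes "finite V" "dominating V adj D"
  shows "domination_number V adj \<le> card D"
proof -
  have "card ` {D. dominating V adj D} \<subseteq> card ` Pow V" unfolding dominating_def by auto
  then have "finite (card ` {D. dominating V adj D})" using assms(1) by (meson finite_Pow_iff finite_imageI finite_subset)
  then show ?thesis unfolding domination_number_def using assms(2) by simp
qed

lemma dn_ge:
  assumes "finite V" "\<And>D. dominating V adj D \<Longrightarrow> k \<le> card D"
  shows "k \<le> domination_number V adj"
proof -
  have "card ` {D. dominating V adj D} \<subseteq> card ` Pow V" unfolding dominating_def by auto
  then have f: "finite (card ` {D. dominating V adj D})" using assms(1) by (meson finite_Pow_iff finite_imageI finite_subset)
  have "dominating V adj V" unfolding dominating_def by auto
  then have ne: "card ` {D. dominating V adj D} \<noteq> {}" by auto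
  have "domination_number V adj \<in> card ` {D. dominating V adj D}"
    unfolding domination_number_def using Min_in[OF f ne] .
  then show ?thesis using assms(2) by auto
qed

lemma modback: "j < (m::nat) \<Longrightarrow> c \<le> m \<Longrightarrow> ((j+c) mod m + m - c) mod m = j"
proof -
  assume a: "j < m" "c \<le> m"
  have "((j+c) mod m + m - c) mod m = ((j+c) mod m + (m - c)) mod m" using a by simp
  also have "\<dots> = (j + c + (m - c)) mod m" by (simp add: mod_add_left_eq)
  also have "j + c + (m - c) = j + m" using a by simp
  finally show ?thesis using a by simp
qed

lemma count_gen:
  assumes "finite D" "S \<subseteq> \<Union> (C ` D)" "\<And>d. d \<in> D \<Longrightarrow> card (C d) \<le> (if P d then 1 else 3)"
    "\<And>d. d \<in> D \<Longrightarrow> finite (C d)"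
  shows "card S \<le> card {d\<in>D. P d} + 3 * card {d\<in>D. \<not> P d}"
proof -
  have "finite (\<Union> (C ` D))" using assms(1,4) by blast
  then have "card S \<le> card (\<Union> (C ` D))" using assms(2) card_mono by blast
  also have "\<dots> \<le> (\<Sum>d\<in>D. card (C d))" by (rule card_UN_le[OF assms(1)])
  also have "\<dots> \<le> (\<Sum>d\<in>D. (if P d then 1 else 3))" by (rule sum_mono) (use assms(3) in auto)
  also have "\<dots> = card {d\<in>D. P d} + 3 * card {d\<in>D. \<not> P d}"
    using assms(1) by (simp add: sum.If_cases Int_def conj_commute)
  finally show ?thesis .
qed

lemma V_mem[simp]: "x \<in> knoedel_vertices n \<longleftrightarrow> (fst x = 1 \<or> fst x = 2) \<and> snd x < n div 2"
  unfolding knoedel_vertices_def by (cases x) auto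

lemma count1:
  assumes m4: "4 \<le> n div 2" and dom: "dominating W (knoedel_adj 3 n) D"
    and W: "W \<subseteq> knoedel_vertices n" and S: "S \<subseteq> W" "S \<subseteq> {1}\<times>UNIV"
  shows "card S \<le> card {d\<in>D. fst d = 1} + 3 * card {d\<in>D. fst d = 2}"
proof -
  define m where "m = n div 2"
  define C where "C d = {v \<in> knoedel_vertices n. fst v = 1 \<and> (v = d \<or> knoedel_adj 3 n v d)}" for d
  have DV: "D \<subseteq> knoedel_vertices n" using dom W unfolding dominating_def by auto
  then have fD: "finite D" using finite_subset finite_V by blast
  have h1: "S \<subseteq> \<Union> (C ` D)"
  proof
    fix v assume v: "v \<in> S"
    then have vW: "v \<in> W" "fst v = 1" using S by auto
    show "v \<in> \<Union> (C ` D)"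
    proof (cases "v \<in> D")
      case True then show ?thesis using vW W unfolding C_def by blast
    next
      case False
      then obtain d where "d \<in> D" "knoedel_adj 3 n v d" using dom vW unfolding dominating_def by blast
      then show ?thesis using vW W unfolding C_def by blast
    qed
  qed
  have h2: "card (C d) \<le> (if fst d = 1 then 1 else 3)" if d: "d \<in> D" for d
  proof -
    obtain i j where dij: "d = (i,j)" by fastforce
    have "i = 1 \<or> i = 2" "j < m" using d DV dij m_def by auto
    then show ?thesis
    proof (elim disjE)
      assume "i = 1"
      have "C d \<subseteq> {d}"
      proof
        fix v assume "v \<in> C d"
        then have v: "fst v = 1" "v = d \<or> knoedel_adj 3 n v d" unfolding C_def by auto
        have "\<not> knoedel_adj 3 n v d" using adj_fst[of n v d] v(1) dij \<open>i=1\<close> by auto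
        then show "v \<in> {d}" using v(2) by simp
      qed
      then have "card (C d) \<le> card {d}" by (intro card_mono) simp_all
      then have "card (C d) \<le> 1" by simp
      then show ?thesis using dij \<open>i=1\<close> by simp
    next
      assume "i = 2"
      have "C d \<subseteq> (\<lambda>c. (1, (j + m - c) mod m)) ` {0,1,3}"
      proof
        fix v assume "v \<in> C d"
        then have v0: "fst v = 1" "snd v < m" "v = d \<or> knoedel_adj 3 n v d" unfolding C_def m_def by auto
        define j' where "j' = snd v"
        have v: "v = (1,j')" "j' < m" "v = d \<or> knoedel_adj 3 n v d" using v0 unfolding j'_def by (cases v; simp)+
        have "v \<noteq> d" using v(1) dij \<open>i=2\<close> by simp
        then have adjv: "knoedel_adj 3 n v d" using v(3) by blast
        have "knoedel_adj 3 n (1,j') (2,j)" using adjv v(1) dij \<open>i=2\<close> by (simp only:)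
        then obtain c where c: "c \<in> {0,1,3}" "j = (j'+c) mod m" using adj12[of n j' j] m_def by blast
        have "c \<le> m" using c m4 m_def by auto
        then have "j' = (j + m - c) mod m" using modback[OF v(2)] c by simp
        then show "v \<in> (\<lambda>c. (1, (j + m - c) mod m)) ` {0,1,3}" using v c by blast
      qed
      then have "card (C d) \<le> card ((\<lambda>c. (1::nat, (j + m - c) mod m)) ` {0::nat,1,3})" by (intro card_mono) auto
      also have "\<dots> \<le> card {0::nat,1,3}" by (rule card_image_le) auto
      also have "\<dots> = 3" by simp
      finally show ?thesis using dij \<open>i=2\<close> by simp
    qed
  qed
  have h3: "finite (C d)" for d unfolding C_def by (rule finite_subset[OF _ finite_V[of n]]) blast
  have "card S \<le> card {d\<in>D. fst d = 1} + 3 * card {d\<in>D. fst d \<noteq> 1}"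
    using count_gen[OF fD h1 h2 h3] by blast
  moreover have "{d\<in>D. fst d \<noteq> 1} = {d\<in>D. fst d = 2}" using DV by auto
  ultimately show ?thesis by simp
qed

lemma count2:
  assumes m4: "4 \<le> n div 2" and dom: "dominating W (knoedel_adj 3 n) D"
    and W: "W \<subseteq> knoedel_vertices n" and S: "S \<subseteq> W" "S \<subseteq> {2}\<times>UNIV"
  shows "card S \<le> card {d\<in>D. fst d = 2} + 3 * card {d\<in>D. fst d = 1}"
proof -
  define m where "m = n div 2"
  define C where "C d = {v \<in> knoedel_vertices n. fst v = 2 \<and> (v = d \<or> knoedel_adj 3 n v d)}" for d
  have DV: "D \<subseteq> knoedel_vertices n" using dom W unfolding dominating_def by auto
  then have fD: "finite D" using finite_subset finite_V by blast
  have h1: "S \<subseteq> \<Union> (C ` D)"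
  proof
    fix v assume v: "v \<in> S"
    then have vW: "v \<in> W" "fst v = 2" using S by auto
    show "v \<in> \<Union> (C ` D)"
    proof (cases "v \<in> D")
      case True then show ?thesis using vW W unfolding C_def by blast
    next
      case False
      then obtain d where "d \<in> D" "knoedel_adj 3 n v d" using dom vW unfolding dominating_def by blast
      then show ?thesis using vW W unfolding C_def by blast
    qed
  qed
  have h2: "card (C d) \<le> (if fst d = 2 then 1 else 3)" if d: "d \<in> D" for d
  proof -
    obtain i j where dij: "d = (i,j)" by fastforce
    have "i = 1 \<or> i = 2" "j < m" using d DV dij m_def by auto
    then show ?thesis
    proof (elim disjE)
      assume "i = 2"
      have "C d \<subseteq> {d}"
      proof
        fix v assume "v \<in> C d"
        then have v: "fst v = 2" "v = d \<or> knoedel_adj 3 n v d" unfolding C_def by auto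
        have "\<not> knoedel_adj 3 n v d" using adj_fst[of n v d] v(1) dij \<open>i=2\<close> by auto
        then show "v \<in> {d}" using v(2) by simp
      qed
      then have "card (C d) \<le> card {d}" by (intro card_mono) simp_all
      then have "card (C d) \<le> 1" by simp
      then show ?thesis using dij \<open>i=2\<close> by simp
    next
      assume "i = 1"
      have "C d \<subseteq> (\<lambda>c. (2, (j + c) mod m)) ` {0,1,3}"
      proof
        fix v assume "v \<in> C d"
        then have v0: "fst v = 2" "v = d \<or> knoedel_adj 3 n v d" unfolding C_def m_def by auto
        define l where "l = snd v"
        have v: "v = (2,l)" "v = d \<or> knoedel_adj 3 n v d" using v0 unfolding l_def by (cases v; simp)+
        have "v \<noteq> d" using v(1) dij \<open>i=1\<close> by simp
        then have adjv: "knoedel_adj 3 n v d" using v(2) by blast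
        have "knoedel_adj 3 n (2,l) (1,j)" using adjv v(1) dij \<open>i=1\<close> by (simp only:)
        then obtain c where c: "c \<in> {0,1,3}" "l = (j+c) mod m" using adj21[of n l j] m_def by blast
        then show "v \<in> (\<lambda>c. (2, (j + c) mod m)) ` {0,1,3}" using v c by blast
      qed
      then have "card (C d) \<le> card ((\<lambda>c. (2::nat, (j + c) mod m)) ` {0::nat,1,3})" by (intro card_mono) auto
      also have "\<dots> \<le> card {0::nat,1,3}" by (rule card_image_le) auto
      also have "\<dots> = 3" by simp
      finally show ?thesis using dij \<open>i=1\<close> by simp
    qed
  qed
  have h3: "finite (C d)" for d unfolding C_def by (rule finite_subset[OF _ finite_V[of n]]) blast
  have "card S \<le> card {d\<in>D. fst d = 2} + 3 * card {d\<in>D. fst d \<noteq> 2}"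
    using count_gen[OF fD h1 h2 h3] by blast
  moreover have "{d\<in>D. fst d \<noteq> 2} = {d\<in>D. fst d = 1}" using DV by auto
  ultimately show ?thesis by simp
qed


lemma p1: "2*(a::nat) \<noteq> 2*q+1" by presburger
lemma p2: "2*(m::nat) \<le> 4*s + 1 \<Longrightarrow> m \<le> 2*s" by presburger
lemma p3: "(m::nat) \<le> 2*s \<Longrightarrow> (m+1) div 2 \<le> s" by presburger
lemma key1:
  assumes "(m::nat) mod 4 = 2" "m \<le> a+3*b" "m \<le> b+3*a" shows "m div 2 + 1 \<le> a+b"
proof (rule ccontr)
  define q where "q = m div 4"
  have "m = 4*(m div 4) + m mod 4" by simp
  then have m: "m = 4*q+2" using assms(1) unfolding q_def by simp
  then have md: "m div 2 = 2*q+1" by simp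
  assume "\<not> m div 2 + 1 \<le> a+b"
  then have "a + b \<le> 2*q+1" using md by simp
  then have "a = b" "a+b = 2*q+1" using assms(2,3) unfolding m by simp_all
  then show False using p1[of a q] by simp
qed
lemma key2:
  assumes "4 \<le> (m::nat)" "m - 1 \<le> a+3*b" "m \<le> b+3*a" shows "(m + 1) div 2 \<le> a+b"
proof -
  have "m - 1 + m \<le> 4*(a+b)" using assms(2,3) by simp
  then have "2*m \<le> 4*(a+b) + 1" using assms(1) by simp
  then show ?thesis using p2 p3 by blast
qed

lemma card_split:
  assumes "D \<subseteq> knoedel_vertices n"
  shows "card D = card {d\<in>D. fst d = 1} + card {d\<in>D. fst d = 2}"
proof -
  have f: "finite D" using assms finite_subset finite_V by blast
  have "D = {d\<in>D. fst d = 1} \<union> {d\<in>D. fst d = 2}" using assms by auto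
  then have "card D = card ({d\<in>D. fst d = 1} \<union> {d\<in>D. fst d = 2})" by simp
  also have "\<dots> = card {d\<in>D. fst d = 1} + card {d\<in>D. fst d = 2}"
    by (rule card_Un_disjoint) (use f in auto)
  finally show ?thesis .
qed

lemma lower_main:
  assumes m4: "4 \<le> n div 2" and m2: "(n div 2) mod 4 = 2"
  shows "n div 2 div 2 + 1 \<le> domination_number (knoedel_vertices n) (knoedel_adj 3 n)"
proof (rule dn_ge[OF finite_V])
  fix D assume dom: "dominating (knoedel_vertices n) (knoedel_adj 3 n) D"
  define m where "m = n div 2"
  have DV: "D \<subseteq> knoedel_vertices n" using dom unfolding dominating_def by auto
  have c1: "card ({1::nat} \<times> {0..<m}) \<le> card {d\<in>D. fst d = 1} + 3 * card {d\<in>D. fst d = 2}"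
    by (rule count1[OF m4 dom]) (auto simp: m_def)
  have c2: "card ({2::nat} \<times> {0..<m}) \<le> card {d\<in>D. fst d = 2} + 3 * card {d\<in>D. fst d = 1}"
    by (rule count2[OF m4 dom]) (auto simp: m_def)
  have "card ({1::nat} \<times> {0..<m}) = m" "card ({2::nat} \<times> {0..<m}) = m" by (simp_all add: card_cartesian_product)
  then show "n div 2 div 2 + 1 \<le> card D"
    using c1 c2 card_split[OF DV] key1[OF m2, of "card {d\<in>D. fst d = 1}" "card {d\<in>D. fst d = 2}"] unfolding m_def by simp
qed

lemma lower_rem:
  assumes m4: "4 \<le> n div 2"
  shows "(n div 2 + 1) div 2 \<le> domination_number (knoedel_vertices n - {(1,0)}) (knoedel_adj 3 n)"
proof (rule dn_ge)
  show "finite (knoedel_vertices n - {(1,0)})" by simp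
  fix D assume dom: "dominating (knoedel_vertices n - {(1,0)}) (knoedel_adj 3 n) D"
  define m where "m = n div 2"
  have DV: "D \<subseteq> knoedel_vertices n" using dom unfolding dominating_def by auto
  have c1: "card ({1::nat} \<times> {1..<m}) \<le> card {d\<in>D. fst d = 1} + 3 * card {d\<in>D. fst d = 2}"
    by (rule count1[OF m4 dom]) (auto simp: m_def)
  have c2: "card ({2::nat} \<times> {0..<m}) \<le> card {d\<in>D. fst d = 2} + 3 * card {d\<in>D. fst d = 1}"
    by (rule count2[OF m4 dom]) (auto simp: m_def)
  have "card ({1::nat} \<times> {1..<m}) = m - 1" "card ({2::nat} \<times> {0..<m}) = m" by (simp_all add: card_cartesian_product)
  then show "(n div 2 + 1) div 2 \<le> card D"
    using c1 c2 card_split[OF DV] key2[OF m4, of "card {d\<in>D. fst d = 1}" "card {d\<in>D. fst d = 2}"] unfolding m_def by simp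
qed


definition shf :: "nat \<Rightarrow> nat \<Rightarrow> nat \<times> nat \<Rightarrow> nat \<times> nat" where
  "shf m t x = (fst x, (snd x + t) mod m)"

lemma mod_fix0:
  assumes "a < (m::nat)" "t < m" "(a+t) mod m = t" shows "a = 0"
proof (cases "a + t < m")
  case True then show ?thesis using assms by simp
next
  case False
  then have "(a+t) mod m = (a+t-m) mod m" by (simp add: le_mod_geq)
  also have "\<dots> = a+t-m" using assms(1,2) by simp
  finally show ?thesis using assms False by simp
qed

lemma mod_unshift:
  assumes "t \<le> (m::nat)" "j < m" shows "((j + m - t) mod m + t) mod m = j"
proof -
  have "((j + m - t) mod m + t) mod m = (j + m - t + t) mod m" by (simp add: mod_add_left_eq)
  also have "j + m - t + t = j + m" using assms by simp
  finally show ?thesis using assms by simp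
qed

lemma adj_shift:
  assumes "knoedel_adj 3 n x y" "0 < n div 2"
  shows "knoedel_adj 3 n (shf (n div 2) t x) (shf (n div 2) t y)"
proof -
  define m where "m = n div 2"
  obtain j c where jc: "j < m" "c \<in> {0,1,3}"
    "(x = (1,j) \<and> y = (2,(j+c) mod m)) \<or> (x = (2,(j+c) mod m) \<and> y = (1,j))"
    using assms(1) unfolding adj_iff m_def by blast
  define j' where "j' = (j+t) mod m"
  have j': "j' < m" using assms(2) unfolding j'_def m_def by simp
  have e: "((j+c) mod m + t) mod m = (j' + c) mod m"
  proof -
    have "((j+c) mod m + t) mod m = (j+c+t) mod m" by (rule mod_add_left_eq)
    moreover have "((j+t) mod m + c) mod m = (j+t+c) mod m" by (rule mod_add_left_eq)
    moreover have "j+c+t = j+t+c" by simp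
    ultimately show ?thesis unfolding j'_def by simp
  qed
  have "(shf m t x = (1,j') \<and> shf m t y = (2,(j'+c) mod m)) \<or> (shf m t x = (2,(j'+c) mod m) \<and> shf m t y = (1,j'))"
    using jc(3) e unfolding shf_def j'_def by auto
  then show ?thesis unfolding adj_iff m_def[symmetric] using j' jc(2) by blast
qed

lemma shift_dom:
  assumes m4: "0 < n div 2" and t: "t < n div 2"
    and dom: "dominating (knoedel_vertices n - {(i,0)}) (knoedel_adj 3 n) D"
  shows "dominating (knoedel_vertices n - {(i,t)}) (knoedel_adj 3 n) (shf (n div 2) t ` D)"
proof -
  define m where "m = n div 2"
  have DV: "D \<subseteq> knoedel_vertices n - {(i,0)}" using dom unfolding dominating_def by auto
  have sub: "shf m t ` D \<subseteq> knoedel_vertices n - {(i,t)}"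
  proof
    fix y assume "y \<in> shf m t ` D"
    then obtain d where d: "d \<in> D" "y = shf m t d" by blast
    have dV: "fst d = 1 \<or> fst d = 2" "snd d < m" "d \<noteq> (i,0)" using d(1) DV m_def by auto
    have "y \<noteq> (i,t)"
    proof
      assume "y = (i,t)"
      then have "fst d = i" "(snd d + t) mod m = t" using d(2) unfolding shf_def by auto
      then have "snd d = 0" using mod_fix0[OF dV(2)] t m_def by simp
      then show False using dV(3) \<open>fst d = i\<close> by (cases d) simp
    qed
    moreover have "y \<in> knoedel_vertices n" using d(2) dV(1) m4 unfolding shf_def m_def by auto
    ultimately show "y \<in> knoedel_vertices n - {(i,t)}" by simp
  qed
  have "\<exists>d'\<in>shf m t ` D. knoedel_adj 3 n v d'"
    if v: "v \<in> knoedel_vertices n - {(i,t)} - shf m t ` D" for v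
  proof -
    define w where "w = (fst v, (snd v + m - t) mod m)"
    have vV: "fst v = 1 \<or> fst v = 2" "snd v < m" using v m_def by auto
    have fw: "shf m t w = v" unfolding w_def shf_def using mod_unshift[of t m "snd v"] vV t m_def by simp
    have wV: "w \<in> knoedel_vertices n" using vV m4 unfolding w_def m_def by simp
    have "shf m t (i,0) = (i,t)" unfolding shf_def using t m_def by simp
    then have "w \<noteq> (i,0)" using fw v by auto
    moreover have "w \<notin> D" using fw v by auto
    ultimately obtain d where "d \<in> D" "knoedel_adj 3 n w d" using dom wV unfolding dominating_def by blast
    then have "knoedel_adj 3 n (shf m t w) (shf m t d)" using adj_shift m4 m_def by blast
    then show ?thesis using fw \<open>d \<in> D\<close> by blast
  qed
  then show ?thesis using sub unfolding dominating_def m_def by blast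
qed


lemma adjI12: "j < n div 2 \<Longrightarrow> c \<in> {0,1,3} \<Longrightarrow> l = (j+c) mod (n div 2) \<Longrightarrow> knoedel_adj 3 n (1,j) (2,l)"
  using adj12 by blast
lemma adjI21: "j < n div 2 \<Longrightarrow> c \<in> {0,1,3} \<Longrightarrow> l = (j+c) mod (n div 2) \<Longrightarrow> knoedel_adj 3 n (2,l) (1,j)"
  using adj21 by blast

lemma card_res:
  assumes "r < 4" "B \<le> 4*K + r"
  shows "card {j::nat. j < B \<and> j mod 4 = r} \<le> K"
proof -
  have "{j::nat. j < B \<and> j mod 4 = r} \<subseteq> (\<lambda>i. 4*i + r) ` {..<K}"
  proof
    fix j assume j: "j \<in> {j::nat. j < B \<and> j mod 4 = r}"
    have jr: "j mod 4 = r" using j by simp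
    have e: "j = 4*(j div 4) + r" using div_mult_mod_eq[of j 4] jr by linarith
    have jB: "j < B" using j by simp
    have "j div 4 < K" using e jB assms(2) by linarith
    then show "j \<in> (\<lambda>i. 4*i + r) ` {..<K}" using e by blast
  qed
  then have "card {j::nat. j < B \<and> j mod 4 = r} \<le> card ((\<lambda>i. 4*i + r) ` {..<K})"
    by (intro card_mono) auto
  also have "\<dots> \<le> K" using card_image_le[of "{..<K}" "\<lambda>i. 4*i + r"] by simp
  finally show ?thesis .
qed

lemma card_pair_le: "finite A \<Longrightarrow> card (Pair (a::nat) ` A) \<le> card (A::nat set)"
  by (rule card_image_le)

lemma mod4_cases: "(x::nat) mod 4 = 0 \<or> x mod 4 = 1 \<or> x mod 4 = 2 \<or> x mod 4 = 3"
  by arith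

lemma upper_A:
  assumes m: "n div 2 = 4*q" and q: "0 < q"
  shows "domination_number (knoedel_vertices n) (knoedel_adj 3 n) \<le> 2*q"
proof -
  define m where "m = n div 2"
  define A where "A = {j. j < m \<and> j mod 4 = 0}"
  define B where "B = {j. j < m \<and> j mod 4 = 2}"
  define D where "D = Pair (1::nat) ` A \<union> Pair (2::nat) ` B"
  have fA: "finite A" "finite B" unfolding A_def B_def by auto
  have cA: "card A \<le> q" unfolding A_def m_def m by (rule card_res) simp_all
  have cB: "card B \<le> q" unfolding B_def m_def m by (rule card_res) simp_all
  have "card D \<le> card (Pair (1::nat) ` A) + card (Pair (2::nat) ` B)" unfolding D_def by (rule card_Un_le)
  also have "\<dots> \<le> card A + card B" using card_pair_le[OF fA(1), of 1] card_pair_le[OF fA(2), of 2] by simp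
  finally have cD: "card D \<le> 2*q" using cA cB by simp
  have mm: "m mod 4 = 0" "4 dvd m" using m unfolding m_def by simp_all
  have "dominating (knoedel_vertices n) (knoedel_adj 3 n) D"
    unfolding dominating_def
  proof (intro conjI ballI)
    show "D \<subseteq> knoedel_vertices n" unfolding D_def A_def B_def m_def by auto
  next
    fix v assume v: "v \<in> knoedel_vertices n - D"
    define j where "j = snd v"
    have j: "j < m" using v unfolding j_def m_def by simp
    have "fst v = 1 \<or> fst v = 2" using v by simp
    then show "\<exists>d\<in>D. knoedel_adj 3 n v d"
    proof
      assume f: "fst v = 1"
      then have vj: "v = (1,j)" unfolding j_def by (cases v) simp
      then have "j \<notin> A" using v unfolding D_def by auto
      then have nj: "j mod 4 \<noteq> 0" using j unfolding A_def by simp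
      consider "j mod 4 = 1" | "j mod 4 = 2" | "j mod 4 = 3" using mod4_cases[of j] nj by auto
      then show ?thesis
      proof cases
        case 1
        have "j + 1 < m" using j 1 mm by presburger
        have "(j+1) mod 4 = 2" using 1 by presburger
        then have "j+1 \<in> B" unfolding B_def using \<open>j+1 < m\<close> by simp
        then have "(2, j+1) \<in> D" unfolding D_def by blast
        moreover have "knoedel_adj 3 n (1,j) (2,j+1)"
          by (rule adjI12[where c=1]) (use j \<open>j+1 < m\<close> in \<open>simp_all add: m_def\<close>)
        ultimately show ?thesis using vj by blast
      next
        case 2
        have "j \<in> B" unfolding B_def using j 2 by simp
        then have "(2, j) \<in> D" unfolding D_def by blast
        moreover have "knoedel_adj 3 n (1,j) (2,j)"
          by (rule adjI12[where c=0]) (use j in \<open>simp_all add: m_def\<close>)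
        ultimately show ?thesis using vj by blast
      next
        case 3
        have "((j+3) mod m) mod 4 = (j+3) mod 4" using mm(2) by (simp add: mod_mod_cancel)
        also have "\<dots> = 2" using 3 by presburger
        finally have "(j+3) mod m \<in> B" unfolding B_def using j by simp
        then have "(2, (j+3) mod m) \<in> D" unfolding D_def by blast
        moreover have "knoedel_adj 3 n (1,j) (2,(j+3) mod m)"
          by (rule adjI12[where c=3]) (use j in \<open>simp_all add: m_def\<close>)
        ultimately show ?thesis using vj by blast
      qed
    next
      assume f: "fst v = 2"
      then have vj: "v = (2,j)" unfolding j_def by (cases v) simp
      then have "j \<notin> B" using v unfolding D_def by auto
      then have nj: "j mod 4 \<noteq> 2" using j unfolding B_def by simp
      consider "j mod 4 = 0" | "j mod 4 = 1" | "j mod 4 = 3" using mod4_cases[of j] nj by auto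
      then show ?thesis
      proof cases
        case 1
        have "j \<in> A" unfolding A_def using j 1 by simp
        then have "(1, j) \<in> D" unfolding D_def by blast
        moreover have "knoedel_adj 3 n (2,j) (1,j)"
          by (rule adjI21[where c=0]) (use j in \<open>simp_all add: m_def\<close>)
        ultimately show ?thesis using vj by blast
      next
        case 2
        have "j \<ge> 1" "(j - 1) mod 4 = 0" using 2 by presburger+
        then have "j - 1 \<in> A" unfolding A_def using j by simp
        then have "(1, j-1) \<in> D" unfolding D_def by blast
        moreover have "knoedel_adj 3 n (2,j) (1,j-1)"
          by (rule adjI21[where c=1]) (use j \<open>j \<ge> 1\<close> in \<open>simp_all add: m_def\<close>)
        ultimately show ?thesis using vj by blast
      next
        case 3
        have "j \<ge> 3" "(j - 3) mod 4 = 0" using 3 by presburger+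
        then have "j - 3 \<in> A" unfolding A_def using j by simp
        then have "(1, j-3) \<in> D" unfolding D_def by blast
        moreover have "knoedel_adj 3 n (2,j) (1,j-3)"
          by (rule adjI21[where c=3]) (use j \<open>j \<ge> 3\<close> in \<open>simp_all add: m_def\<close>)
        ultimately show ?thesis using vj by blast
      qed
    qed
  qed
  then show ?thesis using dn_le[OF finite_V] cD by (meson le_trans)
qed


lemma upper_B3:
  assumes m: "n div 2 = 4*q+3"
  shows "domination_number (knoedel_vertices n) (knoedel_adj 3 n) \<le> 2*q+2"
proof -
  define m where "m = n div 2"
  define A where "A = {j. j < m \<and> j mod 4 = 0}"
  define B where "B = {j. j < m \<and> j mod 4 = 2}"
  define D where "D = Pair (1::nat) ` A \<union> Pair (2::nat) ` B"
  have fA: "finite A" "finite B" unfolding A_def B_def by auto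
  have cA: "card A \<le> q+1" unfolding A_def m_def m by (rule card_res) simp_all
  have cB: "card B \<le> q+1" unfolding B_def m_def m by (rule card_res) simp_all
  have "card D \<le> card (Pair (1::nat) ` A) + card (Pair (2::nat) ` B)" unfolding D_def by (rule card_Un_le)
  also have "\<dots> \<le> card A + card B" using card_pair_le[OF fA(1), of 1] card_pair_le[OF fA(2), of 2] by simp
  finally have cD: "card D \<le> 2*q+2" using cA cB by simp
  have mm: "m = 4*q+3" using m unfolding m_def by simp
  have "dominating (knoedel_vertices n) (knoedel_adj 3 n) D"
    unfolding dominating_def
  proof (intro conjI ballI)
    show "D \<subseteq> knoedel_vertices n" unfolding D_def A_def B_def m_def by auto
  next
    fix v assume v: "v \<in> knoedel_vertices n - D"
    define j where "j = snd v"
    have j: "j < m" using v unfolding j_def m_def by simp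
    have "fst v = 1 \<or> fst v = 2" using v by simp
    then show "\<exists>d\<in>D. knoedel_adj 3 n v d"
    proof
      assume f: "fst v = 1"
      then have vj: "v = (1,j)" unfolding j_def by (cases v) simp
      then have "j \<notin> A" using v unfolding D_def by auto
      then have nj: "j mod 4 \<noteq> 0" using j unfolding A_def by simp
      consider "j mod 4 = 1" | "j mod 4 = 2" | "j mod 4 = 3" using mod4_cases[of j] nj by auto
      then show ?thesis
      proof cases
        case 1
        have "j + 1 < m" using j 1 mm by presburger
        have "(j+1) mod 4 = 2" using 1 by presburger
        then have "j+1 \<in> B" unfolding B_def using \<open>j+1 < m\<close> by simp
        then have "(2, j+1) \<in> D" unfolding D_def by blast
        moreover have "knoedel_adj 3 n (1,j) (2,j+1)"
          by (rule adjI12[where c=1]) (use j \<open>j+1 < m\<close> in \<open>simp_all add: m_def\<close>)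
        ultimately show ?thesis using vj by blast
      next
        case 2
        have "j \<in> B" unfolding B_def using j 2 by simp
        then have "(2, j) \<in> D" unfolding D_def by blast
        moreover have "knoedel_adj 3 n (1,j) (2,j)"
          by (rule adjI12[where c=0]) (use j in \<open>simp_all add: m_def\<close>)
        ultimately show ?thesis using vj by blast
      next
        case 3
        have "j + 3 < m" "(j+3) mod 4 = 2" using j 3 mm by presburger+
        then have "(j+3) mod m \<in> B" unfolding B_def by simp
        then have "(2, (j+3) mod m) \<in> D" unfolding D_def by blast
        moreover have "knoedel_adj 3 n (1,j) (2,(j+3) mod m)"
          by (rule adjI12[where c=3]) (use j in \<open>simp_all add: m_def\<close>)
        ultimately show ?thesis using vj by blast
      qed
    next
      assume f: "fst v = 2"
      then have vj: "v = (2,j)" unfolding j_def by (cases v) simp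
      then have "j \<notin> B" using v unfolding D_def by auto
      then have nj: "j mod 4 \<noteq> 2" using j unfolding B_def by simp
      consider "j mod 4 = 0" | "j mod 4 = 1" | "j mod 4 = 3" using mod4_cases[of j] nj by auto
      then show ?thesis
      proof cases
        case 1
        have "j \<in> A" unfolding A_def using j 1 by simp
        then have "(1, j) \<in> D" unfolding D_def by blast
        moreover have "knoedel_adj 3 n (2,j) (1,j)"
          by (rule adjI21[where c=0]) (use j in \<open>simp_all add: m_def\<close>)
        ultimately show ?thesis using vj by blast
      next
        case 2
        have "j \<ge> 1" "(j - 1) mod 4 = 0" using 2 by presburger+
        then have "j - 1 \<in> A" unfolding A_def using j by simp
        then have "(1, j-1) \<in> D" unfolding D_def by blast
        moreover have "knoedel_adj 3 n (2,j) (1,j-1)"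
          by (rule adjI21[where c=1]) (use j \<open>j \<ge> 1\<close> in \<open>simp_all add: m_def\<close>)
        ultimately show ?thesis using vj by blast
      next
        case 3
        have "j \<ge> 3" "(j - 3) mod 4 = 0" using 3 by presburger+
        then have "j - 3 \<in> A" unfolding A_def using j by simp
        then have "(1, j-3) \<in> D" unfolding D_def by blast
        moreover have "knoedel_adj 3 n (2,j) (1,j-3)"
          by (rule adjI21[where c=3]) (use j \<open>j \<ge> 3\<close> in \<open>simp_all add: m_def\<close>)
        ultimately show ?thesis using vj by blast
      qed
    qed
  qed
  then show ?thesis using dn_le[OF finite_V] cD by (meson le_trans)
qed


lemma upper_B1:
  assumes m: "n div 2 = 4*q+1" and q: "0 < q"
  shows "domination_number (knoedel_vertices n) (knoedel_adj 3 n) \<le> 2*q+1"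
proof -
  define m where "m = n div 2"
  define A where "A = {j. j < 4*q \<and> j mod 4 = 0}"
  define B where "B = insert (m-1) {j. j < m \<and> j mod 4 = 2}"
  define D where "D = Pair (1::nat) ` A \<union> Pair (2::nat) ` B"
  have fA: "finite A" "finite B" unfolding A_def B_def by auto
  have cA: "card A \<le> q" unfolding A_def by (rule card_res) simp_all
  have "card {j. j < m \<and> j mod 4 = 2} \<le> q" unfolding m_def m by (rule card_res) simp_all
  moreover have "finite {j. j < m \<and> j mod 4 = 2}" by simp
  ultimately have cB: "card B \<le> q+1" unfolding B_def by (simp add: card_insert_if)
  have "card D \<le> card (Pair (1::nat) ` A) + card (Pair (2::nat) ` B)" unfolding D_def by (rule card_Un_le)
  also have "\<dots> \<le> card A + card B" using card_pair_le[OF fA(1), of 1] card_pair_le[OF fA(2), of 2] by simp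
  finally have cD: "card D \<le> 2*q+1" using cA cB by simp
  have mm: "m = 4*q+1" using m unfolding m_def by simp
  have "dominating (knoedel_vertices n) (knoedel_adj 3 n) D"
    unfolding dominating_def
  proof (intro conjI ballI)
    show "D \<subseteq> knoedel_vertices n" unfolding D_def A_def B_def using mm m_def by auto
  next
    fix v assume v: "v \<in> knoedel_vertices n - D"
    define j where "j = snd v"
    have j: "j < m" using v unfolding j_def m_def by simp
    have "fst v = 1 \<or> fst v = 2" using v by simp
    then show "\<exists>d\<in>D. knoedel_adj 3 n v d"
    proof
      assume f: "fst v = 1"
      then have vj: "v = (1,j)" unfolding j_def by (cases v) simp
      then have "j \<notin> A" using v unfolding D_def by auto
      then have nj: "j = m - 1 \<or> j mod 4 \<noteq> 0" using j mm unfolding A_def by auto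
      consider "j = m - 1" | "j < m - 1" "j mod 4 = 1" | "j < m - 1" "j mod 4 = 2" | "j = m - 2" "j mod 4 = 3" | "j < m - 2" "j mod 4 = 3"
      proof -
        assume c1: "j = m - 1 \<Longrightarrow> thesis" and c2: "j < m - 1 \<Longrightarrow> j mod 4 = 1 \<Longrightarrow> thesis"
          and c3: "j < m - 1 \<Longrightarrow> j mod 4 = 2 \<Longrightarrow> thesis" and c4: "j = m - 2 \<Longrightarrow> j mod 4 = 3 \<Longrightarrow> thesis"
          and c5: "j < m - 2 \<Longrightarrow> j mod 4 = 3 \<Longrightarrow> thesis"
        show thesis
        proof (cases "j = m - 1")
          case True then show ?thesis by (rule c1)
        next
          case False
          then have jl: "j < m - 1" using j by linarith
          then have "j mod 4 \<noteq> 0" using nj by blast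
          then consider "j mod 4 = 1" | "j mod 4 = 2" | "j mod 4 = 3" using mod4_cases[of j] by auto
          then show ?thesis
          proof cases
            case 1 then show ?thesis using c2 jl by blast
          next
            case 2 then show ?thesis using c3 jl by blast
          next
            case 3 then show ?thesis
            proof (cases "j = m - 2")
              case True then show ?thesis using c4 3 by blast
            next
              case False then have "j < m - 2" using jl by linarith
              then show ?thesis using c5 3 by blast
            qed
          qed
        qed
      qed
      then show ?thesis
      proof cases
        case 1
        have "(2, m-1) \<in> D" unfolding D_def B_def by blast
        moreover have "knoedel_adj 3 n (1,j) (2,m-1)"
          by (rule adjI12[where c=0]) (use j 1 in \<open>simp_all add: m_def\<close>)
        ultimately show ?thesis using vj 1 by blast
      next
        case 2
        have "j + 1 < m" "(j+1) mod 4 = 2" using 2 mm by presburger+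
        then have "j+1 \<in> B" unfolding B_def by simp
        then have "(2, j+1) \<in> D" unfolding D_def by blast
        moreover have "knoedel_adj 3 n (1,j) (2,j+1)"
          by (rule adjI12[where c=1]) (use j \<open>j+1 < m\<close> in \<open>simp_all add: m_def\<close>)
        ultimately show ?thesis using vj by blast
      next
        case 3
        have "j \<in> B" unfolding B_def using j 3 by simp
        then have "(2, j) \<in> D" unfolding D_def by blast
        moreover have "knoedel_adj 3 n (1,j) (2,j)"
          by (rule adjI12[where c=0]) (use j in \<open>simp_all add: m_def\<close>)
        ultimately show ?thesis using vj by blast
      next
        case 4
        have "(2, m-1) \<in> D" unfolding D_def B_def by blast
        moreover have "j + 1 = m - 1" using 4 mm by simp
        moreover have "knoedel_adj 3 n (1,j) (2,j+1)"
          by (rule adjI12[where c=1]) (use j 4 mm in \<open>simp_all add: m_def\<close>)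
        ultimately show ?thesis using vj by auto
      next
        case 5
        have "j + 3 < m" "(j+3) mod 4 = 2" using 5 mm by presburger+
        then have "j+3 \<in> B" unfolding B_def by simp
        then have "(2, j+3) \<in> D" unfolding D_def by blast
        moreover have "knoedel_adj 3 n (1,j) (2,j+3)"
          by (rule adjI12[where c=3]) (use j \<open>j+3 < m\<close> in \<open>simp_all add: m_def\<close>)
        ultimately show ?thesis using vj by blast
      qed
    next
      assume f: "fst v = 2"
      then have vj: "v = (2,j)" unfolding j_def by (cases v) simp
      then have "j \<notin> B" using v unfolding D_def by auto
      then have nj: "j mod 4 \<noteq> 2" "j < m - 1" using j unfolding B_def by auto
      consider "j mod 4 = 0" | "j mod 4 = 1" | "j mod 4 = 3" using mod4_cases[of j] nj by auto
      then show ?thesis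
      proof cases
        case 1
        have "j < 4*q" using nj mm by simp
        then have "j \<in> A" unfolding A_def using 1 by simp
        then have "(1, j) \<in> D" unfolding D_def by blast
        moreover have "knoedel_adj 3 n (2,j) (1,j)"
          by (rule adjI21[where c=0]) (use j in \<open>simp_all add: m_def\<close>)
        ultimately show ?thesis using vj by blast
      next
        case 2
        have "j \<ge> 1" "(j - 1) mod 4 = 0" using 2 by presburger+
        moreover have "j - 1 < 4*q" using nj mm by simp
        ultimately have "j - 1 \<in> A" unfolding A_def by simp
        then have "(1, j-1) \<in> D" unfolding D_def by blast
        moreover have "knoedel_adj 3 n (2,j) (1,j-1)"
          by (rule adjI21[where c=1]) (use j \<open>j \<ge> 1\<close> in \<open>simp_all add: m_def\<close>)
        ultimately show ?thesis using vj by blast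
      next
        case 3
        have "j \<ge> 3" "(j - 3) mod 4 = 0" using 3 by presburger+
        moreover have "j - 3 < 4*q" using nj mm by simp
        ultimately have "j - 3 \<in> A" unfolding A_def by simp
        then have "(1, j-3) \<in> D" unfolding D_def by blast
        moreover have "knoedel_adj 3 n (2,j) (1,j-3)"
          by (rule adjI21[where c=3]) (use j \<open>j \<ge> 3\<close> in \<open>simp_all add: m_def\<close>)
        ultimately show ?thesis using vj by blast
      qed
    qed
  qed
  then show ?thesis using dn_le[OF finite_V] cD by (meson le_trans)
qed


lemma mod4_sub:
  assumes "s \<le> (j::nat)" "s \<le> 4" shows "(j - s) mod 4 = (j mod 4 + (4 - s)) mod 4"
proof -
  have "(j - s) mod 4 = (j - s + 4) mod 4" by simp
  also have "j - s + 4 = j + (4 - s)" using assms by simp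
  also have "(j + (4 - s)) mod 4 = (j mod 4 + (4 - s)) mod 4" by (simp add: mod_add_left_eq)
  finally show ?thesis .
qed

lemma ge_of_mod: "(j::nat) mod 4 = r \<Longrightarrow> r \<le> j"
  using mod_less_eq_dividend[of j 4] by simp

lemma upper_C2:
  assumes m: "n div 2 = 4*q+2" and q: "0 < q"
  shows "\<exists>D. dominating (knoedel_vertices n - {(2,0)}) (knoedel_adj 3 n) D \<and> card D \<le> 2*q+1"
proof -
  define m where "m = n div 2"
  define A where "A = {j. j < 4*q+1 \<and> j mod 4 = 1}"
  define B where "B = insert (m-1) {j. j < m \<and> j mod 4 = 3}"
  define D where "D = Pair (1::nat) ` A \<union> Pair (2::nat) ` B"
  have fA: "finite A" "finite B" unfolding A_def B_def by auto
  have cA: "card A \<le> q" unfolding A_def by (rule card_res) simp_all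
  have "card {j. j < m \<and> j mod 4 = 3} \<le> q" unfolding m_def m by (rule card_res) simp_all
  moreover have "finite {j. j < m \<and> j mod 4 = 3}" by simp
  ultimately have cB: "card B \<le> q+1" unfolding B_def by (simp add: card_insert_if)
  have "card D \<le> card (Pair (1::nat) ` A) + card (Pair (2::nat) ` B)" unfolding D_def by (rule card_Un_le)
  also have "\<dots> \<le> card A + card B" using card_pair_le[OF fA(1), of 1] card_pair_le[OF fA(2), of 2] by simp
  finally have cD: "card D \<le> 2*q+1" using cA cB by simp
  have mm: "m = 4*q+2" using m unfolding m_def by simp
  have "dominating (knoedel_vertices n - {(2,0)}) (knoedel_adj 3 n) D"
    unfolding dominating_def
  proof (intro conjI ballI)
    show "D \<subseteq> knoedel_vertices n - {(2,0)}" unfolding D_def A_def B_def using mm m_def by auto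
  next
    fix v assume v: "v \<in> knoedel_vertices n - {(2,0)} - D"
    define j where "j = snd v"
    have j: "j < m" using v unfolding j_def m_def by simp
    have "fst v = 1 \<or> fst v = 2" using v by simp
    then show "\<exists>d\<in>D. knoedel_adj 3 n v d"
    proof
      assume f: "fst v = 1"
      then have vj: "v = (1,j)" unfolding j_def by (cases v) simp
      then have "j \<notin> A" using v unfolding D_def by auto
      then have nj: "j = m - 1 \<or> j mod 4 \<noteq> 1" using j mm unfolding A_def by auto
      consider "j = m - 1" | "j mod 4 = 3" | "j mod 4 = 2" | "j = m - 2" | "j < m - 2" "j mod 4 = 0"
      proof -
        assume c1: "j = m - 1 \<Longrightarrow> thesis" and c2: "j mod 4 = 3 \<Longrightarrow> thesis"
          and c3: "j mod 4 = 2 \<Longrightarrow> thesis" and c4: "j = m - 2 \<Longrightarrow> thesis"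
          and c5: "j < m - 2 \<Longrightarrow> j mod 4 = 0 \<Longrightarrow> thesis"
        show thesis
        proof (cases "j = m - 1")
          case True then show ?thesis by (rule c1)
        next
          case False
          then have jl: "j < m - 1" using j by linarith
          then have "j mod 4 \<noteq> 1" using nj by blast
          then consider "j mod 4 = 0" | "j mod 4 = 2" | "j mod 4 = 3" using mod4_cases[of j] by auto
          then show ?thesis
          proof cases
            case 1 then show ?thesis
            proof (cases "j = m - 2")
              case True then show ?thesis using c4 by blast
            next
              case False then have "j < m - 2" using jl by linarith
              then show ?thesis using c5 1 by blast
            qed
          next
            case 2 then show ?thesis using c3 by blast
          next
            case 3 then show ?thesis using c2 by blast
          qed
        qed
      qed
      then show ?thesis
      proof cases
        case 1
        have "(2, m-1) \<in> D" unfolding D_def B_def by blast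
        moreover have "knoedel_adj 3 n (1,j) (2,m-1)"
          by (rule adjI12[where c=0]) (use j 1 in \<open>simp_all add: m_def\<close>)
        ultimately show ?thesis using vj 1 by blast
      next
        case 2
        have "j \<in> B" unfolding B_def using j 2 by simp
        then have "(2, j) \<in> D" unfolding D_def by blast
        moreover have "knoedel_adj 3 n (1,j) (2,j)"
          by (rule adjI12[where c=0]) (use j in \<open>simp_all add: m_def\<close>)
        ultimately show ?thesis using vj by blast
      next
        case 3
        have "j + 1 < m" "(j+1) mod 4 = 3" using j 3 mm by presburger+
        then have "j+1 \<in> B" unfolding B_def by simp
        then have "(2, j+1) \<in> D" unfolding D_def by blast
        moreover have "knoedel_adj 3 n (1,j) (2,j+1)"
          by (rule adjI12[where c=1]) (use j \<open>j+1 < m\<close> in \<open>simp_all add: m_def\<close>)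
        ultimately show ?thesis using vj by blast
      next
        case 4
        have "(2, m-1) \<in> D" unfolding D_def B_def by blast
        moreover have "j + 1 = m - 1" using 4 mm by simp
        moreover have "knoedel_adj 3 n (1,j) (2,j+1)"
          by (rule adjI12[where c=1]) (use j 4 mm in \<open>simp_all add: m_def\<close>)
        ultimately show ?thesis using vj by auto
      next
        case 5
        have "j + 3 < m" "(j+3) mod 4 = 3" using 5 mm by presburger+
        then have "j+3 \<in> B" unfolding B_def by simp
        then have "(2, j+3) \<in> D" unfolding D_def by blast
        moreover have "knoedel_adj 3 n (1,j) (2,j+3)"
          by (rule adjI12[where c=3]) (use j \<open>j+3 < m\<close> in \<open>simp_all add: m_def\<close>)
        ultimately show ?thesis using vj by blast
      qed
    next
      assume f: "fst v = 2"
      then have vj: "v = (2,j)" unfolding j_def by (cases v) simp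
      then have "j \<notin> B" using v unfolding D_def by auto
      then have nj: "j mod 4 \<noteq> 3" "j < m - 1" using j unfolding B_def by auto
      have j0: "j \<noteq> 0" using v vj by auto
      consider "j mod 4 = 0" | "j mod 4 = 1" | "j mod 4 = 2" using mod4_cases[of j] nj by auto
      then show ?thesis
      proof cases
        case 2
        have "j < 4*q+1" using nj mm by simp
        then have "j \<in> A" unfolding A_def using 2 by simp
        then have "(1, j) \<in> D" unfolding D_def by blast
        moreover have "knoedel_adj 3 n (2,j) (1,j)"
          by (rule adjI21[where c=0]) (use j in \<open>simp_all add: m_def\<close>)
        ultimately show ?thesis using vj by blast
      next
        case 3
        have "j \<ge> 1" using ge_of_mod[OF 3] by simp
        moreover have "(j - 1) mod 4 = 1" using mod4_sub[of 1 j] \<open>j \<ge> 1\<close> 3 by simp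
        moreover have "j - 1 < 4*q+1" using nj mm by simp
        ultimately have "j - 1 \<in> A" unfolding A_def by simp
        then have "(1, j-1) \<in> D" unfolding D_def by blast
        moreover have "knoedel_adj 3 n (2,j) (1,j-1)"
          by (rule adjI21[where c=1]) (use j \<open>j \<ge> 1\<close> in \<open>simp_all add: m_def\<close>)
        ultimately show ?thesis using vj by blast
      next
        case 1
        have "j \<ge> 3" using 1 j0 by presburger
        moreover have "(j - 3) mod 4 = 1" using mod4_sub[of 3 j] \<open>j \<ge> 3\<close> 1 by simp
        moreover have "j - 3 < 4*q+1" using nj mm by simp
        ultimately have "j - 3 \<in> A" unfolding A_def by simp
        then have "(1, j-3) \<in> D" unfolding D_def by blast
        moreover have "knoedel_adj 3 n (2,j) (1,j-3)"
          by (rule adjI21[where c=3]) (use j \<open>j \<ge> 3\<close> in \<open>simp_all add: m_def\<close>)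
        ultimately show ?thesis using vj by blast
      qed
    qed
  qed
  then show ?thesis using cD by blast
qed


lemma upper_C1:
  assumes m: "n div 2 = 4*q+2" and q: "0 < q"
  shows "\<exists>D. dominating (knoedel_vertices n - {(1,0)}) (knoedel_adj 3 n) D \<and> card D \<le> 2*q+1"
proof -
  define m where "m = n div 2"
  have mm: "m = 4*q+2" using m unfolding m_def by simp
  define A where "A = insert 1 {j. j < m \<and> j mod 4 = 3}"
  define B0 where "B0 = {j. j < m \<and> j mod 4 = 1}"
  define B where "B = B0 - {1}"
  define D where "D = Pair (1::nat) ` A \<union> Pair (2::nat) ` B"
  have fA: "finite A" "finite B" unfolding A_def B_def B0_def by auto
  have "card {j. j < m \<and> j mod 4 = 3} \<le> q" unfolding m_def m by (rule card_res) simp_all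
  moreover have "finite {j. j < m \<and> j mod 4 = 3}" by simp
  ultimately have cA: "card A \<le> q+1" unfolding A_def by (simp add: card_insert_if)
  have "card B0 \<le> q+1" unfolding B0_def m_def m by (rule card_res) simp_all
  moreover have "1 \<in> B0" unfolding B0_def using mm q by simp
  moreover have "finite B0" unfolding B0_def by simp
  ultimately have cB: "card B \<le> q" unfolding B_def by (simp add: card_Diff_singleton)
  have "card D \<le> card (Pair (1::nat) ` A) + card (Pair (2::nat) ` B)" unfolding D_def by (rule card_Un_le)
  also have "\<dots> \<le> card A + card B" using card_pair_le[OF fA(1), of 1] card_pair_le[OF fA(2), of 2] by simp
  finally have cD: "card D \<le> 2*q+1" using cA cB by simp
  have "dominating (knoedel_vertices n - {(1,0)}) (knoedel_adj 3 n) D"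
    unfolding dominating_def
  proof (intro conjI ballI)
    show "D \<subseteq> knoedel_vertices n - {(1,0)}" unfolding D_def A_def B_def B0_def using mm q m_def by auto
  next
    fix v assume v: "v \<in> knoedel_vertices n - {(1,0)} - D"
    define j where "j = snd v"
    have j: "j < m" using v unfolding j_def m_def by simp
    have "fst v = 1 \<or> fst v = 2" using v by simp
    then show "\<exists>d\<in>D. knoedel_adj 3 n v d"
    proof
      assume f: "fst v = 1"
      then have vj: "v = (1,j)" unfolding j_def by (cases v) simp
      then have "j \<notin> A" using v unfolding D_def by auto
      then have nj: "j \<noteq> 1" "j mod 4 \<noteq> 3" using j unfolding A_def by auto
      have j0: "j \<noteq> 0" using v vj by auto
      consider "j mod 4 = 0" | "j mod 4 = 1" | "j mod 4 = 2" using mod4_cases[of j] nj by auto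
      then show ?thesis
      proof cases
        case 1
        have "j + 1 < m" using j 1 mm by presburger
        moreover have "(j+1) mod 4 = (j mod 4 + 1) mod 4" by (rule mod_add_left_eq[symmetric])
        then have "(j+1) mod 4 = 1" using 1 by simp
        ultimately have "j+1 \<in> B" unfolding B_def B0_def using j0 by simp
        then have "(2, j+1) \<in> D" unfolding D_def by blast
        moreover have "knoedel_adj 3 n (1,j) (2,j+1)"
          by (rule adjI12[where c=1]) (use j \<open>j+1 < m\<close> in \<open>simp_all add: m_def\<close>)
        ultimately show ?thesis using vj by blast
      next
        case 2
        have "j \<in> B" unfolding B_def B0_def using j 2 nj by simp
        then have "(2, j) \<in> D" unfolding D_def by blast
        moreover have "knoedel_adj 3 n (1,j) (2,j)"
          by (rule adjI12[where c=0]) (use j in \<open>simp_all add: m_def\<close>)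
        ultimately show ?thesis using vj by blast
      next
        case 3
        have "j + 3 < m" using j 3 mm by presburger
        moreover have "(j+3) mod 4 = (j mod 4 + 3) mod 4" by (rule mod_add_left_eq[symmetric])
        then have "(j+3) mod 4 = 1" using 3 by simp
        ultimately have "j+3 \<in> B" unfolding B_def B0_def by simp
        then have "(2, j+3) \<in> D" unfolding D_def by blast
        moreover have "knoedel_adj 3 n (1,j) (2,j+3)"
          by (rule adjI12[where c=3]) (use j \<open>j+3 < m\<close> in \<open>simp_all add: m_def\<close>)
        ultimately show ?thesis using vj by blast
      qed
    next
      assume f: "fst v = 2"
      then have vj: "v = (2,j)" unfolding j_def by (cases v) simp
      then have "j \<notin> B" using v unfolding D_def by auto
      then have nj: "j = 1 \<or> j mod 4 \<noteq> 1" using j unfolding B_def B0_def by auto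
      have one: "(1::nat) \<in> A" unfolding A_def by simp
      consider "j = 0" | "j = 1" | "j = 2" | "j \<ge> 3" "j mod 4 = 0" | "j \<ge> 3" "j mod 4 = 2" | "j mod 4 = 3"
      proof -
        assume c1: "j = 0 \<Longrightarrow> thesis" and c2: "j = 1 \<Longrightarrow> thesis" and c3: "j = 2 \<Longrightarrow> thesis"
          and c4: "j \<ge> 3 \<Longrightarrow> j mod 4 = 0 \<Longrightarrow> thesis" and c5: "j \<ge> 3 \<Longrightarrow> j mod 4 = 2 \<Longrightarrow> thesis"
          and c6: "j mod 4 = 3 \<Longrightarrow> thesis"
        show thesis
        proof (cases "j \<ge> 3")
          case False
          then have "j = 0 \<or> j = 1 \<or> j = 2" by linarith
          then show ?thesis using c1 c2 c3 by blast
        next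
          case True
          then have "j \<noteq> 1" by simp
          then have "j mod 4 \<noteq> 1" using nj by blast
          then consider "j mod 4 = 0" | "j mod 4 = 2" | "j mod 4 = 3" using mod4_cases[of j] by auto
          then show ?thesis
          proof cases
            case 1 then show ?thesis by (rule c4[OF True])
          next
            case 2 then show ?thesis by (rule c5[OF True])
          next
            case 3 then show ?thesis by (rule c6)
          qed
        qed
      qed
      then show ?thesis
      proof cases
        case 1
        have "m \<ge> 3" using mm q by simp
        have "m mod 4 = 2" unfolding mm by presburger
        then have "(m - 3) mod 4 = 3" using mod4_sub[of 3 m] \<open>m \<ge> 3\<close> by simp
        then have "m - 3 \<in> A" unfolding A_def using \<open>m \<ge> 3\<close> by simp
        then have "(1, m-3) \<in> D" unfolding D_def by blast
        moreover have "knoedel_adj 3 n (2,j) (1,m-3)"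
          by (rule adjI21[where c=3]) (use 1 \<open>m \<ge> 3\<close> in \<open>simp_all add: m_def[symmetric]\<close>)
        ultimately show ?thesis using vj by blast
      next
        case 2
        have "(1, 1) \<in> D" unfolding D_def using one by blast
        moreover have "knoedel_adj 3 n (2,j) (1,1)"
          by (rule adjI21[where c=0]) (use 2 mm q in \<open>simp_all add: m_def[symmetric]\<close>)
        ultimately show ?thesis using vj by blast
      next
        case 3
        have "(1, 1) \<in> D" unfolding D_def using one by blast
        moreover have "knoedel_adj 3 n (2,j) (1,1)"
          by (rule adjI21[where c=1]) (use 3 mm q in \<open>simp_all add: m_def[symmetric]\<close>)
        ultimately show ?thesis using vj by blast
      next
        case 4
        have "(j - 1) mod 4 = 3" using mod4_sub[of 1 j] 4 by simp
        moreover have "j - 1 < m" using j by linarith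
        ultimately have "j - 1 \<in> A" unfolding A_def by simp
        then have "(1, j-1) \<in> D" unfolding D_def by blast
        moreover have "knoedel_adj 3 n (2,j) (1,j-1)"
          by (rule adjI21[where c=1]) (use j 4 in \<open>simp_all add: m_def\<close>)
        ultimately show ?thesis using vj by blast
      next
        case 5
        have "(j - 3) mod 4 = 3" using mod4_sub[of 3 j] 5 by simp
        moreover have "j - 3 < m" using j by linarith
        ultimately have "j - 3 \<in> A" unfolding A_def by simp
        then have "(1, j-3) \<in> D" unfolding D_def by blast
        moreover have "knoedel_adj 3 n (2,j) (1,j-3)"
          by (rule adjI21[where c=3]) (use j 5 in \<open>simp_all add: m_def\<close>)
        ultimately show ?thesis using vj by blast
      next
        case 6
        have "j \<in> A" unfolding A_def using j 6 by simp
        then have "(1, j) \<in> D" unfolding D_def by blast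
        moreover have "knoedel_adj 3 n (2,j) (1,j)"
          by (rule adjI21[where c=0]) (use j in \<open>simp_all add: m_def\<close>)
        ultimately show ?thesis using vj by blast
      qed
    qed
  qed
  then show ?thesis using cD by blast
qed


lemma upper_rem:
  assumes m: "n div 2 = 4*q+2" and q: "0 < q" and u: "u \<in> knoedel_vertices n"
  shows "domination_number (knoedel_vertices n - {u}) (knoedel_adj 3 n) \<le> 2*q+1"
proof -
  obtain i t where ut: "u = (i,t)" by fastforce
  have i: "i = 1 \<or> i = 2" and t: "t < n div 2" using u ut by auto
  obtain D where D: "dominating (knoedel_vertices n - {(i,0)}) (knoedel_adj 3 n) D" "card D \<le> 2*q+1"
    using i upper_C1[OF m q] upper_C2[OF m q] by blast
  have m0: "0 < n div 2" using m by simp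
  have dom: "dominating (knoedel_vertices n - {(i,t)}) (knoedel_adj 3 n) (shf (n div 2) t ` D)"
    by (rule shift_dom[OF m0 t D(1)])
  have "finite D" using D(1) unfolding dominating_def using finite_subset[of D "knoedel_vertices n"] by auto
  then have "card (shf (n div 2) t ` D) \<le> 2*q+1" using card_image_le[of D "shf (n div 2) t"] D(2) by linarith
  moreover have "domination_number (knoedel_vertices n - {(i,t)}) (knoedel_adj 3 n) \<le> card (shf (n div 2) t ` D)"
    by (rule dn_le[OF _ dom]) simp
  ultimately show ?thesis using ut by simp
qed

theorem theorem3p1:
  fixes n :: nat
  assumes "even n" and "n \<ge> 8"
  shows "gamma_critical (knoedel_vertices n) (knoedel_adj 3 n) \<longleftrightarrow> n mod 8 = 4"
proof -
  define m where "m = n div 2"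
  have n2: "n = 2*m" using assms(1) unfolding m_def by simp
  have m4: "4 \<le> n div 2" using assms(2) by simp
  have "n mod 8 = 2 * (m mod 4)" unfolding n2 using mod_mult_mult1[of 2 m 4] by simp
  then have iff: "n mod 8 = 4 \<longleftrightarrow> m mod 4 = 2" by simp
  define q where "q = m div 4"
  have mq: "m = 4*q + m mod 4" unfolding q_def using div_mult_mod_eq[of m 4] by linarith
  have q0: "0 < q" using m4 mq unfolding m_def q_def by simp
  show ?thesis
  proof (cases "m mod 4 = 2")
    case True
    have mq2: "n div 2 = 4*q+2" using mq True m_def by simp
    have low: "2*q+2 \<le> domination_number (knoedel_vertices n) (knoedel_adj 3 n)"
      using lower_main[OF m4] True mq2 unfolding m_def by simp
    have "\<forall>u \<in> knoedel_vertices n. domination_number (knoedel_vertices n - {u}) (knoedel_adj 3 n) < domination_number (knoedel_vertices n) (knoedel_adj 3 n)"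
    proof
      fix u assume "u \<in> knoedel_vertices n"
      then have "domination_number (knoedel_vertices n - {u}) (knoedel_adj 3 n) \<le> 2*q+1"
        by (rule upper_rem[OF mq2 q0])
      then show "domination_number (knoedel_vertices n - {u}) (knoedel_adj 3 n) < domination_number (knoedel_vertices n) (knoedel_adj 3 n)"
        using low by linarith
    qed
    then show ?thesis unfolding gamma_critical_def using iff True by simp
  next
    case False
    have up: "domination_number (knoedel_vertices n) (knoedel_adj 3 n) \<le> (n div 2 + 1) div 2"
    proof -
      consider "m mod 4 = 0" | "m mod 4 = 1" | "m mod 4 = 3" using mod4_cases[of m] False by auto
      then show ?thesis
      proof cases
        case 1
        then have "n div 2 = 4*q" using mq m_def by simp
        moreover have "(4*q + 1) div 2 = 2*q" by simp
        ultimately show ?thesis using upper_A[of n q] q0 by simp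
      next
        case 2
        then have "n div 2 = 4*q+1" using mq m_def by simp
        moreover have "(4*q + 1 + 1) div 2 = 2*q+1" by simp
        ultimately show ?thesis using upper_B1[of n q] q0 by simp
      next
        case 3
        then have "n div 2 = 4*q+3" using mq m_def by simp
        moreover have "(4*q + 3 + 1) div 2 = 2*q+2" by simp
        ultimately show ?thesis using upper_B3[of n q] by simp
      qed
    qed
    have low: "(n div 2 + 1) div 2 \<le> domination_number (knoedel_vertices n - {(1,0)}) (knoedel_adj 3 n)"
      by (rule lower_rem[OF m4])
    have "(1::nat, 0::nat) \<in> knoedel_vertices n" using m4 by simp
    then have "\<not> gamma_critical (knoedel_vertices n) (knoedel_adj 3 n)"
      unfolding gamma_critical_def using up low by fastforce
    then show ?thesis using iff False by simp
  qed
qed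

end
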